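(* $\mathsf{AP}(R_1,R_1)=\operatorname{Pol}(R_1,R'_1)=\mathsf{\Omega(1)}$.
   Context: Tuples in $\{0,1\}^4$ are written as strings $abcd$. The relations $R_1,\dots,R_5\subseteq\{0,1\}^4$ are $R_1=\{0000,1000,0100,1100,1010,0110,1001,0101,0011,1011,0111,1111\}$, $R_2=\{0000,1000,0100,1100,1010,0101,0011,1111\}$, $R_3=\{0000,1100,1010,0101,0011,1011,0111,1111\}$, $R_4=\{0000,1100,1010,0101,0011,1111\}$, $R_5=\{0000,1100,1010,0110,1001,0101,0011,1111\}$. For $R,S\subseteq\{0,1\}^4$, a Boolean function $f\colon\{0,1\}^n\to\{0,1\}$ is analogy-preserving relative to $(R,S)$ if for all $\mathbf{a},\mathbf{b},\mathbf{c},\mathbf{d}\in\{0,1\}^n$ with $(a_i,b_i,c_i,d_i)\in R$ for every $i$ and such that $(f(\mathbf{a}),f(\mathbf{b}),f(\mathbf{c}),x)\in S$ for some $x\in\{0,1\}$, we have $(f(\mathbf{a}),f(\mathbf{b}),f(\mathbf{c}),f(\mathbf{d}))\in S$; $\mathsf{AP}(R,S)$ is the set of all such functions of all arities. $S':=S\cup\{(a,b,c,d)\mid\nexists x\colon(a,b,c,x)\in S\}$, and $\operatorname{Pol}(R,S)$ is the set of Boolean functions $f$ with $f(\mathbf{a}_1,\dots,\mathbf{a}_n)\in S$ (componentwise) for all $\mathbf{a}_1,\dots,\mathbf{a}_n\in R$. $\mathsf{\Omega(1)}$ is the set of all Boolean functions (of all arities) that are constant, a projection, or the negation of a projection. *)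

theory Defs
  imports Main
begin

text \<open>Boolean values: 0 = False, 1 = True. A 4-tuple abcd is (a,b,c,d).
A Boolean function of arity n is represented as a pair (n, f) with
f :: bool list \<Rightarrow> bool, of which only the values on lists of length n
matter (all definitions below only evaluate f on lists of length n).\<close>

type_synonym tup4 = "bool \<times> bool \<times> bool \<times> bool"
type_synonym bfun = "nat \<times> (bool list \<Rightarrow> bool)"

definition R1 :: "tup4 set" where
  "R1 = {(False,False,False,False), (True,False,False,False), (False,True,False,False),
         (True,True,False,False), (True,False,True,False), (False,True,True,False),
         (True,False,False,True), (False,True,False,True), (False,False,True,True),
         (True,False,True,True), (False,True,True,True), (True,True,True,True)}"

definition AP :: "tup4 set \<Rightarrow> tup4 set \<Rightarrow> bfun set" where
  "AP R S = {(n, f). \<forall>a b c d :: bool list.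
      length a = n \<and> length b = n \<and> length c = n \<and> length d = n \<and>
      (\<forall>i<n. (a!i, b!i, c!i, d!i) \<in> R) \<and> (\<exists>x. (f a, f b, f c, x) \<in> S)
      \<longrightarrow> (f a, f b, f c, f d) \<in> S}"

definition prime_rel :: "tup4 set \<Rightarrow> tup4 set" where
  "prime_rel S = S \<union> {(a,b,c,d). \<not> (\<exists>x. (a,b,c,x) \<in> S)}"

definition Pol :: "tup4 set \<Rightarrow> tup4 set \<Rightarrow> bfun set" where
  "Pol R S = {(n, f). \<forall>t :: nat \<Rightarrow> tup4. (\<forall>i<n. t i \<in> R) \<longrightarrow>
      (f (map (\<lambda>i. fst (t i)) [0..<n]),
       f (map (\<lambda>i. fst (snd (t i))) [0..<n]),
       f (map (\<lambda>i. fst (snd (snd (t i)))) [0..<n]),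
       f (map (\<lambda>i. snd (snd (snd (t i)))) [0..<n])) \<in> S}"

definition Omega1 :: "bfun set" where
  "Omega1 = {(n, f).
      (\<exists>c. \<forall>x. length x = n \<longrightarrow> f x = c) \<or>
      (\<exists>i<n. \<forall>x. length x = n \<longrightarrow> f x = x!i) \<or>
      (\<exists>i<n. \<forall>x. length x = n \<longrightarrow> f x = (\<not> x!i))}"

end

theory Submission
  imports Defs
begin

lemma R1_iff: "((a,b,c,d) \<in> R1) = (a = b \<longrightarrow> c = d)"
  by (cases a; cases b; cases c; cases d) (simp_all add: R1_def)

lemma prime_R1: "prime_rel R1 = R1"
  unfolding prime_rel_def by (auto simp: R1_iff)

definition PP :: "nat \<Rightarrow> (bool list \<Rightarrow> bool) \<Rightarrow> bool" where
  "PP n f = (\<forall>a b c d. length a = n \<longrightarrow> length b = n \<longrightarrow> length c = n \<longrightarrow> length d = n \<longrightarrow>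
     (\<forall>i<n. a!i = b!i \<longrightarrow> c!i = d!i) \<longrightarrow> f a = f b \<longrightarrow> f c = f d)"

lemma AP_iff: "((n,f) \<in> AP R1 R1) = PP n f"
  unfolding AP_def PP_def by (auto simp: R1_iff)

lemma map_nth': "length a = n \<Longrightarrow> map (\<lambda>i. a!i) [0..<n] = a"
  by (metis map_nth)

lemma Pol_iff: "((n,f) \<in> Pol R1 (prime_rel R1)) = PP n f"
proof
  assume "(n,f) \<in> Pol R1 (prime_rel R1)"
  hence H: "\<forall>t :: nat \<Rightarrow> tup4. (\<forall>i<n. t i \<in> R1) \<longrightarrow>
      (f (map (\<lambda>i. fst (t i)) [0..<n]),
       f (map (\<lambda>i. fst (snd (t i))) [0..<n]),
       f (map (\<lambda>i. fst (snd (snd (t i)))) [0..<n]),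
       f (map (\<lambda>i. snd (snd (snd (t i)))) [0..<n])) \<in> R1"
    unfolding Pol_def prime_R1 by simp
  show "PP n f" unfolding PP_def
  proof (intro allI impI)
    fix a b c d :: "bool list"
    assume l: "length a = n" "length b = n" "length c = n" "length d = n"
      and r: "\<forall>i<n. a!i = b!i \<longrightarrow> c!i = d!i" and e: "f a = f b"
    have "(f a, f b, f c, f d) \<in> R1"
      using H[rule_format, of "\<lambda>i. (a!i,b!i,c!i,d!i)"] r l
      by (simp add: R1_iff map_nth')
    thus "f c = f d" using e by (simp add: R1_iff)
  qed
next
  assume P: "PP n f"
  show "(n,f) \<in> Pol R1 (prime_rel R1)"
    unfolding Pol_def prime_R1
  proof (simp, intro allI impI)
    fix t :: "nat \<Rightarrow> tup4"
    assume "\<forall>i<n. t i \<in> R1"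
    then show "(f (map (\<lambda>i. fst (t i)) [0..<n]),
       f (map (\<lambda>i. fst (snd (t i))) [0..<n]),
       f (map (\<lambda>i. fst (snd (snd (t i)))) [0..<n]),
       f (map (\<lambda>i. snd (snd (snd (t i)))) [0..<n])) \<in> R1"
    proof -
      assume T: "\<forall>i<n. t i \<in> R1"
      let ?a = "map (\<lambda>i. fst (t i)) [0..<n]"
      let ?b = "map (\<lambda>i. fst (snd (t i))) [0..<n]"
      let ?c = "map (\<lambda>i. fst (snd (snd (t i)))) [0..<n]"
      let ?d = "map (\<lambda>i. snd (snd (snd (t i)))) [0..<n]"
      have r: "\<forall>i<n. ?a!i = ?b!i \<longrightarrow> ?c!i = ?d!i"
      proof (intro allI impI)
        fix i assume "i < n" "?a!i = ?b!i"
        moreover obtain p q r s where "t i = (p,q,r,s)" by (cases "t i") auto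
        ultimately show "?c!i = ?d!i" using T by (auto simp: R1_iff)
      qed
      have "f ?a = f ?b \<longrightarrow> f ?c = f ?d"
      proof
        assume "f ?a = f ?b"
        moreover have "length ?a = n" "length ?b = n" "length ?c = n" "length ?d = n" by simp_all
        ultimately show "f ?c = f ?d" using P r unfolding PP_def by blast
      qed
      thus ?thesis by (simp add: R1_iff)
    qed
  qed
qed

definition indep :: "nat \<Rightarrow> (bool list \<Rightarrow> bool) \<Rightarrow> nat set \<Rightarrow> bool" where
  "indep n f S = (\<forall>c d. length c = n \<longrightarrow> length d = n \<longrightarrow> (\<forall>i<n. i \<notin> S \<longrightarrow> c!i = d!i) \<longrightarrow> f c = f d)"

lemma PP_indep: "PP n f \<Longrightarrow> length a = n \<Longrightarrow> length b = n \<Longrightarrow> f a = f b \<Longrightarrow>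
   indep n f {i. a!i \<noteq> b!i}"
  unfolding indep_def
proof (intro allI impI)
  fix c d :: "bool list"
  assume P: "PP n f" and l: "length a = n" "length b = n" "f a = f b" "length c = n" "length d = n"
    and r: "\<forall>i<n. i \<notin> {i. a ! i \<noteq> b ! i} \<longrightarrow> c ! i = d ! i"
  have r': "\<forall>i<n. a ! i = b ! i \<longrightarrow> c ! i = d ! i" using r by simp
  show "f c = f d" using P[unfolded PP_def, rule_format, of a b c d] l r' by blast
qed

lemma indep_mono: "indep n f S \<Longrightarrow> T \<inter> {..<n} \<subseteq> S \<Longrightarrow> indep n f T"
  unfolding indep_def
proof (intro allI impI)
  fix c d :: "bool list"
  assume A: "\<forall>c d. length c = n \<longrightarrow> length d = n \<longrightarrow> (\<forall>i<n. i \<notin> S \<longrightarrow> c!i = d!i) \<longrightarrow> f c = f d"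
    and ST: "T \<inter> {..<n} \<subseteq> S" and "length c = n" "length d = n" and r: "\<forall>i<n. i \<notin> T \<longrightarrow> c!i = d!i"
  have "\<forall>i<n. i \<notin> S \<longrightarrow> c!i = d!i"
  proof (intro allI impI)
    fix i assume "i < n" "i \<notin> S"
    hence "i \<notin> T" using ST by blast
    thus "c!i = d!i" using r \<open>i < n\<close> by blast
  qed
  thus "f c = f d" using A \<open>length c = n\<close> \<open>length d = n\<close> by blast
qed

lemma indep_step: "indep n f {..<k} \<Longrightarrow> indep n f {k} \<Longrightarrow> indep n f {..<Suc k}"
  unfolding indep_def
proof (intro allI impI)
  fix c d :: "bool list"
  assume A: "\<forall>c d. length c = n \<longrightarrow> length d = n \<longrightarrow> (\<forall>i<n. i \<notin> {..<k} \<longrightarrow> c ! i = d ! i) \<longrightarrow> f c = f d"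
    and B: "\<forall>c d. length c = n \<longrightarrow> length d = n \<longrightarrow> (\<forall>i<n. i \<notin> {k} \<longrightarrow> c ! i = d ! i) \<longrightarrow> f c = f d"
    and l: "length c = n" "length d = n" and r: "\<forall>i<n. i \<notin> {..<Suc k} \<longrightarrow> c ! i = d ! i"
  define e where "e = c[k := d!k]"
  have le: "length e = n" using l by (simp add: e_def)
  have "\<forall>i<n. i \<notin> {k} \<longrightarrow> c ! i = e ! i" using r l by (auto simp: e_def nth_list_update)
  hence "f c = f e" using B[rule_format, of c e] l le by blast
  moreover have "\<forall>i<n. i \<notin> {..<k} \<longrightarrow> e ! i = d ! i" using r l by (auto simp: e_def nth_list_update)
  hence "f e = f d" using A[rule_format, of e d] l le by blast
  ultimately show "f c = f d" by simp
qed

lemma indepD: "indep n f S \<Longrightarrow> length c = n \<Longrightarrow> length d = n \<Longrightarrow>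
  (\<And>i. i < n \<Longrightarrow> i \<notin> S \<Longrightarrow> c!i = d!i) \<Longrightarrow> f c = f d"
  unfolding indep_def by blast

lemma Omega_iff: "((n,f) \<in> Omega1) = PP n f"
proof
  assume "(n,f) \<in> Omega1"
  thus "PP n f" unfolding Omega1_def PP_def by auto
next
  assume P: "PP n f"
  define z where "z = replicate n False"
  have lz: "length z = n" by (simp add: z_def)
  show "(n,f) \<in> Omega1"
  proof (cases "\<exists>a. length a = n \<and> f a = f (map Not a)")
    case True
    then obtain a where a: "length a = n" "f a = f (map Not a)" by blast
    have "indep n f {i. a!i \<noteq> map Not a!i}" using PP_indep[OF P a(1) _ a(2)] a(1) by simp
    hence "indep n f {..<n}" by (rule indep_mono) (auto simp: a(1))
    hence "\<forall>x. length x = n \<longrightarrow> f x = f z" using lz by (metis indepD lessThan_iff)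
    thus ?thesis unfolding Omega1_def by blast
  next
    case False
    hence N: "\<And>a. length a = n \<Longrightarrow> f (map Not a) \<noteq> f a" by metis
    show ?thesis
    proof (cases "\<exists>i<n. indep n f (- {i})")
      case True
      then obtain i where i: "i < n" "indep n f (- {i})" by blast
      define o1 where "o1 = z[i := True]"
      have lo: "length o1 = n" by (simp add: o1_def lz)
      have "f (map Not z) = f o1" using lz lo
        by (intro indepD[OF i(2)]) (auto simp: o1_def z_def nth_list_update)
      hence ne: "f o1 \<noteq> f z" using N[OF lz] by simp
      have fx: "f x = (if x!i then f o1 else f z)" if "length x = n" for x
      proof (cases "x!i")
        case True
        have "f x = f o1" using that lo
          by (intro indepD[OF i(2)]) (auto simp: o1_def z_def nth_list_update True)
        thus ?thesis using True by simp
      next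
        case False
        have "f x = f z" using that lz
          by (intro indepD[OF i(2)]) (auto simp: z_def False)
        thus ?thesis using False by simp
      qed
      show ?thesis
      proof (cases "f z")
        case True
        note fz = this
        have "\<forall>x. length x = n \<longrightarrow> f x = (\<not> x!i)"
        proof (intro allI impI)
          fix x :: "bool list" assume lx: "length x = n"
          show "f x = (\<not> x!i)"
          proof (cases "x!i")
            case True thus ?thesis using fx[OF lx] ne fz by simp
          next
            case False thus ?thesis using fx[OF lx] ne fz by simp
          qed
        qed
        thus ?thesis unfolding Omega1_def using i by blast
      next
        case False
        note fz = this
        have "\<forall>x. length x = n \<longrightarrow> f x = x!i"
        proof (intro allI impI)
          fix x :: "bool list" assume lx: "length x = n"
          show "f x = x!i"
          proof (cases "x!i")
            case True thus ?thesis using fx[OF lx] ne fz by simp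
          next
            case False thus ?thesis using fx[OF lx] ne fz by simp
          qed
        qed
        thus ?thesis unfolding Omega1_def using i by blast
      qed
    next
      case F2: False
      have single: "indep n f {i}" if "i < n" for i
      proof (cases "f z = f (z[i := True])")
        case True
        have "indep n f {j. z!j \<noteq> z[i := True]!j}" using PP_indep[OF P lz _ True] lz by simp
        thus ?thesis by (rule indep_mono) (auto simp: z_def nth_list_update)
      next
        case False
        have l1: "length (z[i := True]) = n" using lz by simp
        have "f z = f (map Not (z[i := True]))" using False N[OF l1] by auto
        hence "indep n f {j. z!j \<noteq> map Not (z[i := True])!j}"
          using PP_indep[OF P lz] l1 by simp
        hence "indep n f (- {i})" by (rule indep_mono) (auto simp: z_def nth_list_update)
        thus ?thesis using F2 that by blast
      qed
      have "k \<le> n \<Longrightarrow> indep n f {..<k}" for k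
      proof (induction k)
        case 0 show ?case unfolding indep_def
        proof (intro allI impI)
          fix c d :: "bool list"
          assume "length c = n" "length d = n" "\<forall>i<n. i \<notin> {..<0} \<longrightarrow> c ! i = d ! i"
          hence "c = d" by (intro nth_equalityI) auto
          thus "f c = f d" by simp
        qed
      next
        case (Suc k)
        hence "indep n f {..<k}" "k < n" by simp_all
        thus ?case using indep_step single by blast
      qed
      hence "indep n f {..<n}" by simp
      hence "f (map Not z) = f z" by (rule indepD) (auto simp: lz)
      thus ?thesis using N[OF lz] by simp
    qed
  qed
qed

theorem mainTheorem7:
  shows "AP R1 R1 = Pol R1 (prime_rel R1) \<and> Pol R1 (prime_rel R1) = Omega1"
proof
  show "AP R1 R1 = Pol R1 (prime_rel R1)"
  proof (rule set_eqI)
    fix x :: bfun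
    obtain n f where "x = (n,f)" by (cases x)
    thus "(x \<in> AP R1 R1) = (x \<in> Pol R1 (prime_rel R1))" by (simp add: Pol_iff AP_iff)
  qed
next
  show "Pol R1 (prime_rel R1) = Omega1"
  proof (rule set_eqI)
    fix x :: bfun
    obtain n f where "x = (n,f)" by (cases x)
    thus "(x \<in> Pol R1 (prime_rel R1)) = (x \<in> Omega1)" by (simp add: Pol_iff Omega_iff)
  qed
qed

end
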